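(* Let $G=\bigl((f_j)_{j=1}^n;(\mu^{R})_{\emptyset\ne R\subseteq[n]}\bigr)$ be an $n$-resource selection game. (a) Every Nash equilibrium of $G$ is a strong Nash equilibrium. (b) If there exists a Nash equilibrium $s$ of $G$ such that for every $j\in[n]$, $h^s_j$ is not a plateau height of $f_j$, then every Nash equilibrium of $G$ is a super-strong Nash equilibrium.
   Context: Write $[n]=\{1,\ldots,n\}$ and $\mathbb{R}_{\ge}=[0,\infty)$. An $n$-resource selection game is a pair $G=\bigl((f_j)_{j=1}^n;(\mu^{R})_{\emptyset\ne R\subseteq[n]}\bigr)$ where each $f_j:\mathbb{R}_{\ge}\to\mathbb{R}$ is nondecreasing and $\mu^R\in\mathbb{R}_{\ge}$ for every nonempty $R\subseteq[n]$. A consumption profile is a map $s$ assigning to each nonempty $R\subseteq[n]$ a vector $s(R)\in\mathbb{R}_{\ge}^{[n]}$ with $s_j(R)=0$ for $j\notin R$ and $\sum_{j}s_j(R)=\mu^R$. The load of resource $j$ is $\mu^s_j=\sum_{R}s_j(R)$ and its cost is $h^s_j=f_j(\mu^s_j)$. $s$ is a Nash equilibrium if for every nonempty $R$, every $k$ with $s_k(R)>0$ and every $j\in R$, $h^s_k\le h^s_j$. For a Nash equilibrium $s$ and $R$ with $\mu^R>0$, let $h^R=h^s_k$ for any $k$ with $s_k(R)>0$. A Nash equilibrium $s$ is strong if there is no consumption profile $s'\ne s$ such that for every $R$ and every $k$ with $s'_k(R)>s_k(R)$, $h^{s'}_k<h^R$. It is super-strong if there is no consumption profile $s'$ such that for every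 $R$ and every $k$ with $s'_k(R)>s_k(R)$, $h^{s'}_k\le h^R$, and additionally there is at least one pair $(R,k)$ with $s'_k(R)>0$ and $h^{s'}_k<h^R$. A real $h$ is a plateau height of a nondecreasing $f$ if there are $x\ne y$ with $f(x)=f(y)=h$. *)

theory Defs
  imports Main "HOL.Real"
begin

definition coalitions :: "nat \<Rightarrow> nat set set" where
  "coalitions n = {R. R \<subseteq> {1..n} \<and> R \<noteq> {}}"

definition rs_game :: "nat \<Rightarrow> (nat \<Rightarrow> real \<Rightarrow> real) \<Rightarrow> (nat set \<Rightarrow> real) \<Rightarrow> bool" where
  "rs_game n f mu \<longleftrightarrow>
     (\<forall>j\<in>{1..n}. mono_on {0..} (f j)) \<and> (\<forall>R\<in>coalitions n. mu R \<ge> 0)"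

text \<open>Consumption profile; s R j is the consumption of resource j by R.
  Values outside the index range (R not a nonempty subset of [n], or j not in R) are fixed to 0.\<close>
definition profile :: "nat \<Rightarrow> (nat set \<Rightarrow> real) \<Rightarrow> (nat set \<Rightarrow> nat \<Rightarrow> real) \<Rightarrow> bool" where
  "profile n mu s \<longleftrightarrow>
     (\<forall>R j. (R \<notin> coalitions n \<or> j \<notin> R) \<longrightarrow> s R j = 0) \<and>
     (\<forall>R\<in>coalitions n. (\<forall>j. s R j \<ge> 0) \<and> (\<Sum>j\<in>{1..n}. s R j) = mu R)"

definition load :: "nat \<Rightarrow> (nat set \<Rightarrow> nat \<Rightarrow> real) \<Rightarrow> nat \<Rightarrow> real" where
  "load n s j = (\<Sum>R\<in>coalitions n. s R j)"

definition cost :: "nat \<Rightarrow> (nat \<Rightarrow> real \<Rightarrow> real) \<Rightarrow> (nat set \<Rightarrow> nat \<Rightarrow> real) \<Rightarrow> nat \<Rightarrow> real" where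
  "cost n f s j = f j (load n s j)"

definition nash :: "nat \<Rightarrow> (nat \<Rightarrow> real \<Rightarrow> real) \<Rightarrow> (nat set \<Rightarrow> real) \<Rightarrow> (nat set \<Rightarrow> nat \<Rightarrow> real) \<Rightarrow> bool" where
  "nash n f mu s \<longleftrightarrow> profile n mu s \<and>
     (\<forall>R\<in>coalitions n. \<forall>k. s R k > 0 \<longrightarrow> (\<forall>j\<in>R. cost n f s k \<le> cost n f s j))"

text \<open>h^R: the cost of any resource used by R (well defined at a Nash equilibrium when mu R > 0).\<close>
definition height :: "nat \<Rightarrow> (nat \<Rightarrow> real \<Rightarrow> real) \<Rightarrow> (nat set \<Rightarrow> nat \<Rightarrow> real) \<Rightarrow> nat set \<Rightarrow> real" where
  "height n f s R = cost n f s (SOME k. s R k > 0)"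

definition strong_nash :: "nat \<Rightarrow> (nat \<Rightarrow> real \<Rightarrow> real) \<Rightarrow> (nat set \<Rightarrow> real) \<Rightarrow> (nat set \<Rightarrow> nat \<Rightarrow> real) \<Rightarrow> bool" where
  "strong_nash n f mu s \<longleftrightarrow> nash n f mu s \<and>
     \<not> (\<exists>s'. profile n mu s' \<and> s' \<noteq> s \<and>
           (\<forall>R\<in>coalitions n. \<forall>k. s' R k > s R k \<longrightarrow> cost n f s' k < height n f s R))"

definition super_strong_nash :: "nat \<Rightarrow> (nat \<Rightarrow> real \<Rightarrow> real) \<Rightarrow> (nat set \<Rightarrow> real) \<Rightarrow> (nat set \<Rightarrow> nat \<Rightarrow> real) \<Rightarrow> bool" where
  "super_strong_nash n f mu s \<longleftrightarrow> nash n f mu s \<and>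
     \<not> (\<exists>s'. profile n mu s' \<and>
           (\<forall>R\<in>coalitions n. \<forall>k. s' R k > s R k \<longrightarrow> cost n f s' k \<le> height n f s R) \<and>
           (\<exists>R\<in>coalitions n. \<exists>k. s' R k > 0 \<and> cost n f s' k < height n f s R))"

definition plateau_height :: "(real \<Rightarrow> real) \<Rightarrow> real \<Rightarrow> bool" where
  "plateau_height g h \<longleftrightarrow> (\<exists>x y. x \<ge> 0 \<and> y \<ge> 0 \<and> x \<noteq> y \<and> g x = h \<and> g y = h)"

end

theory Submission
  imports Defs
begin

lemma fin_C: "finite (coalitions n)"
  unfolding coalitions_def by (rule finite_subset[of _ "Pow {1..n}"]) auto

lemma prof_out: "profile n mu s \<Longrightarrow> j \<notin> R \<or> R \<notin> coalitions n \<Longrightarrow> s R j = 0"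
  unfolding profile_def by blast

lemma prof_nonneg: "profile n mu s \<Longrightarrow> s R j \<ge> 0"
  unfolding profile_def by (cases "R \<in> coalitions n") auto

lemma prof_sum: "profile n mu s \<Longrightarrow> R \<in> coalitions n \<Longrightarrow> (\<Sum>j\<in>{1..n}. s R j) = mu R"
  unfolding profile_def by blast

lemma pos_mem: "profile n mu s \<Longrightarrow> s R k > 0 \<Longrightarrow> R \<in> coalitions n \<and> k \<in> R \<and> k \<in> {1..n}"
proof -
  assume p: "profile n mu s" and k: "s R k > 0"
  have "R \<in> coalitions n \<and> k \<in> R" using prof_out[OF p, of k R] k by auto
  then show ?thesis unfolding coalitions_def by auto
qed

lemma load_nonneg: "profile n mu s \<Longrightarrow> load n s j \<ge> 0"
  unfolding load_def by (rule sum_nonneg) (rule prof_nonneg)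

lemma total: "profile n mu s \<Longrightarrow> (\<Sum>j\<in>{1..n}. load n s j) = (\<Sum>R\<in>coalitions n. mu R)"
proof -
  assume p: "profile n mu s"
  have "(\<Sum>j\<in>{1..n}. \<Sum>R\<in>coalitions n. s R j) = (\<Sum>R\<in>coalitions n. \<Sum>j\<in>{1..n}. s R j)"
    by (rule sum.swap)
  also have "\<dots> = (\<Sum>R\<in>coalitions n. mu R)"
    by (rule sum.cong) (rule refl, erule prof_sum[OF p])
  finally show ?thesis unfolding load_def .
qed

lemma height_le:
  assumes "nash n f mu s" "R \<in> coalitions n" "s R k0 > 0" "j \<in> R"
  shows "height n f s R \<le> cost n f s j"
proof -
  have "s R (SOME k. s R k > 0) > 0" using assms(3) by (rule someI)
  then show ?thesis using assms unfolding height_def nash_def by blast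
qed

lemma decrease:
  assumes p: "profile n mu s" and p': "profile n mu s'"
    and H: "\<forall>R\<in>coalitions n. \<forall>k. s' R k > s R k \<longrightarrow> load n s' k \<le> load n s k"
    and j: "j \<in> {1..n}"
  shows "load n s' j = load n s j"
proof -
  have le: "load n s' i \<le> load n s i" for i
  proof (rule ccontr)
    assume c: "\<not> ?thesis"
    have "\<exists>R\<in>coalitions n. s' R i > s R i"
    proof (rule ccontr)
      assume "\<not> ?thesis"
      then have "load n s' i \<le> load n s i" unfolding load_def
        by (intro sum_mono) (auto simp: not_less)
      with c show False by simp
    qed
    with H have "load n s' i \<le> load n s i" by blast
    with c show False by simp
  qed
  have "(\<Sum>i\<in>{1..n}. load n s i - load n s' i) = 0"
    using total[OF p] total[OF p'] by (simp add: sum_subtractf)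
  moreover have "\<forall>i\<in>{1..n}. load n s i - load n s' i \<ge> 0" using le by simp
  ultimately have "\<forall>i\<in>{1..n}. load n s i - load n s' i = 0"
    by (subst (asm) sum_nonneg_eq_0_iff) auto
  with j show ?thesis by simp
qed

lemma vi_R:
  assumes ns: "nash n f mu s" and pt: "profile n mu t" and R: "R \<in> coalitions n"
  shows "(\<Sum>j\<in>{1..n}. cost n f s j * s R j) \<le> (\<Sum>j\<in>{1..n}. cost n f s j * t R j)"
proof -
  have ps: "profile n mu s" using ns unfolding nash_def by blast
  show ?thesis
  proof (cases "\<exists>k. s R k > 0")
    case True
    then obtain k0 where k0: "s R k0 > 0" by blast
    define h where "h = cost n f s k0"
    have k0R: "k0 \<in> R" using pos_mem[OF ps k0] by blast
    have ge: "j \<in> R \<Longrightarrow> h \<le> cost n f s j" for j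
      using ns R k0 unfolding nash_def h_def by blast
    have eq: "s R j > 0 \<Longrightarrow> cost n f s j = h" for j
      using ge[of j] pos_mem[OF ps, of R j] ns R k0R unfolding nash_def h_def
      by (meson order_antisym)
    have "(\<Sum>j\<in>{1..n}. cost n f s j * s R j) = (\<Sum>j\<in>{1..n}. h * s R j)"
    proof (rule sum.cong)
      fix j assume "j \<in> {1..n}"
      show "cost n f s j * s R j = h * s R j"
        using eq[of j] prof_nonneg[OF ps, of R j] by (cases "s R j > 0") auto
    qed simp
    also have "\<dots> = h * mu R" using prof_sum[OF ps R] by (simp add: sum_distrib_left[symmetric])
    also have "\<dots> = (\<Sum>j\<in>{1..n}. h * t R j)" using prof_sum[OF pt R] by (simp add: sum_distrib_left[symmetric])
    also have "\<dots> \<le> (\<Sum>j\<in>{1..n}. cost n f s j * t R j)"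
    proof (rule sum_mono)
      fix j assume "j \<in> {1..n}"
      show "h * t R j \<le> cost n f s j * t R j"
      proof (cases "t R j > 0")
        case True
        then have "j \<in> R" using pos_mem[OF pt] by blast
        then show ?thesis using ge[of j] prof_nonneg[OF pt, of R j] by (simp add: mult_right_mono)
      next
        case False
        then have "t R j = 0" using prof_nonneg[OF pt, of R j] by simp
        then show ?thesis by simp
      qed
    qed
    finally show ?thesis .
  next
    case False
    then have s0: "s R j = 0" for j using prof_nonneg[OF ps, of R j] by (metis not_less order_antisym)
    then have "mu R = 0" using prof_sum[OF ps R] by simp
    then have "(\<Sum>j\<in>{1..n}. t R j) = 0" using prof_sum[OF pt R] by simp
    then have "\<forall>j\<in>{1..n}. t R j = 0"
      by (subst (asm) sum_nonneg_eq_0_iff) (auto intro: prof_nonneg[OF pt])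
    then show ?thesis using s0 by simp
  qed
qed

lemma vi:
  assumes ns: "nash n f mu s" and pt: "profile n mu t"
  shows "(\<Sum>j\<in>{1..n}. cost n f s j * load n s j) \<le> (\<Sum>j\<in>{1..n}. cost n f s j * load n t j)"
proof -
  have "(\<Sum>j\<in>{1..n}. cost n f s j * load n s j) =
        (\<Sum>R\<in>coalitions n. \<Sum>j\<in>{1..n}. cost n f s j * s R j)"
    unfolding load_def by (subst sum.swap) (simp add: sum_distrib_left)
  also have "\<dots> \<le> (\<Sum>R\<in>coalitions n. \<Sum>j\<in>{1..n}. cost n f s j * t R j)"
    by (rule sum_mono) (rule vi_R[OF ns pt])
  also have "\<dots> = (\<Sum>j\<in>{1..n}. cost n f s j * load n t j)"
    unfolding load_def by (subst sum.swap) (simp add: sum_distrib_left)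
  finally show ?thesis .
qed

lemma unique_cost:
  assumes g: "rs_game n f mu" and ns: "nash n f mu s" and nt: "nash n f mu t"
    and j: "j \<in> {1..n}"
  shows "cost n f s j = cost n f t j"
proof -
  have ps: "profile n mu s" using ns unfolding nash_def by blast
  have pt: "profile n mu t" using nt unfolding nash_def by blast
  define d where "d i = (cost n f s i - cost n f t i) * (load n s i - load n t i)" for i
  have nn: "d i \<ge> 0" if "i \<in> {1..n}" for i
  proof -
    have m: "mono_on {0..} (f i)" using g that unfolding rs_game_def by blast
    show ?thesis
    proof (cases "load n t i \<le> load n s i")
      case True
      then have "cost n f t i \<le> cost n f s i" unfolding cost_def
        using mono_onD[OF m] load_nonneg[OF ps] load_nonneg[OF pt] by auto
      then show ?thesis unfolding d_def using True by simp
    next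
      case False
      then have "cost n f s i \<le> cost n f t i" unfolding cost_def
        using mono_onD[OF m] load_nonneg[OF ps] load_nonneg[OF pt] by auto
      then show ?thesis unfolding d_def using False
        by (intro mult_nonpos_nonpos) auto
    qed
  qed
  have "(\<Sum>i\<in>{1..n}. d i) = (\<Sum>i\<in>{1..n}. cost n f s i * load n s i) - (\<Sum>i\<in>{1..n}. cost n f s i * load n t i)
        + ((\<Sum>i\<in>{1..n}. cost n f t i * load n t i) - (\<Sum>i\<in>{1..n}. cost n f t i * load n s i))"
    unfolding d_def by (simp add: sum_subtractf sum.distrib algebra_simps)
  also have "\<dots> \<le> 0" using vi[OF ns pt] vi[OF nt ps] by simp
  finally have "(\<Sum>i\<in>{1..n}. d i) \<le> 0" .
  then have "(\<Sum>i\<in>{1..n}. d i) = 0" using sum_nonneg[of "{1..n}" d] nn by force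
  then have "\<forall>i\<in>{1..n}. d i = 0" by (subst (asm) sum_nonneg_eq_0_iff) (auto intro: nn)
  then have "d j = 0" using j by blast
  then show ?thesis unfolding d_def cost_def by auto
qed

lemma exists_incr:
  assumes p: "profile n mu s" and p': "profile n mu s'" and ne: "s' \<noteq> s"
  shows "\<exists>R\<in>coalitions n. \<exists>k. s' R k > s R k"
proof (rule ccontr)
  assume c: "\<not> ?thesis"
  obtain R j where d: "s' R j \<noteq> s R j" using ne by (meson ext)
  have R: "R \<in> coalitions n" using d prof_out[OF p] prof_out[OF p'] by metis
  have jR: "j \<in> R" using d prof_out[OF p] prof_out[OF p'] by metis
  then have j: "j \<in> {1..n}" using R unfolding coalitions_def by auto
  have lt: "s' R j < s R j" using c R d by (meson linorder_neqE_linordered_idom)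
  have "(\<Sum>i\<in>{1..n}. s' R i) < (\<Sum>i\<in>{1..n}. s R i)"
    by (rule sum_strict_mono_ex1) (use c R lt j in \<open>auto simp: not_less\<close>)
  then show False using prof_sum[OF p R] prof_sum[OF p' R] by simp
qed

theorem mainTheorem4:
  assumes "rs_game n f mu"
  shows "(\<forall>s. nash n f mu s \<longrightarrow> strong_nash n f mu s) \<and>
         ((\<exists>s. nash n f mu s \<and> (\<forall>j\<in>{1..n}. \<not> plateau_height (f j) (cost n f s j)))
            \<longrightarrow> (\<forall>s. nash n f mu s \<longrightarrow> super_strong_nash n f mu s))"
proof (intro conjI allI impI)
  fix s assume ns: "nash n f mu s"
  have ps: "profile n mu s" using ns unfolding nash_def by blast
  show "strong_nash n f mu s" unfolding strong_nash_def
  proof (intro conjI ns notI)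
    assume "\<exists>s'. profile n mu s' \<and> s' \<noteq> s \<and>
           (\<forall>R\<in>coalitions n. \<forall>k. s' R k > s R k \<longrightarrow> cost n f s' k < height n f s R)"
    then obtain s' where p': "profile n mu s'" and ne: "s' \<noteq> s"
      and H: "\<forall>R\<in>coalitions n. \<forall>k. s' R k > s R k \<longrightarrow> cost n f s' k < height n f s R" by blast
    have key: "cost n f s' k < cost n f s k" if R: "R \<in> coalitions n" and k: "s' R k > s R k" for R k
    proof -
      have pos: "s' R k > 0" using k prof_nonneg[OF ps, of R k] by simp
      have kR: "k \<in> R" using pos_mem[OF p' pos] by blast
      have "0 < (\<Sum>i\<in>{1..n}. s' R i)"
        using pos pos_mem[OF p' pos] by (intro sum_pos2[of _ k]) (auto intro: prof_nonneg[OF p'])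
      then have "0 < (\<Sum>i\<in>{1..n}. s R i)" using prof_sum[OF p' R] prof_sum[OF ps R] by simp
      then obtain k0 where "s R k0 > 0"
        by (metis (no_types, lifting) less_le_not_le not_le sum_nonpos)
      then have "height n f s R \<le> cost n f s k" using height_le[OF ns R _ kR] by blast
      then show ?thesis using H R k by force
    qed
    have dec: "\<forall>R\<in>coalitions n. \<forall>k. s' R k > s R k \<longrightarrow> load n s' k \<le> load n s k"
    proof (intro ballI allI impI)
      fix R k assume R: "R \<in> coalitions n" and k: "s' R k > s R k"
      have pos: "s' R k > 0" using k prof_nonneg[OF ps, of R k] by simp
      have kn: "k \<in> {1..n}" using pos_mem[OF p' pos] by blast
      have m: "mono_on {0..} (f k)" using assms kn unfolding rs_game_def by blast
      show "load n s' k \<le> load n s k"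
      proof (rule ccontr)
        assume "\<not> ?thesis"
        then have "cost n f s k \<le> cost n f s' k" unfolding cost_def
          using mono_onD[OF m] load_nonneg[OF ps] load_nonneg[OF p'] by auto
        then show False using key[OF R k] by simp
      qed
    qed
    obtain R k where R: "R \<in> coalitions n" and k: "s' R k > s R k"
      using exists_incr[OF ps p' ne] by blast
    have pos: "s' R k > 0" using k prof_nonneg[OF ps, of R k] by simp
    have kn: "k \<in> {1..n}" using pos_mem[OF p' pos] by blast
    have "load n s' k = load n s k" using decrease[OF ps p' dec kn] .
    then show False using key[OF R k] unfolding cost_def by simp
  qed
next
  fix s assume ex: "\<exists>s. nash n f mu s \<and> (\<forall>j\<in>{1..n}. \<not> plateau_height (f j) (cost n f s j))"
    and ns: "nash n f mu s"
  have ps: "profile n mu s" using ns unfolding nash_def by blast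
  obtain s0 where ns0: "nash n f mu s0" and np0: "\<forall>j\<in>{1..n}. \<not> plateau_height (f j) (cost n f s0 j)"
    using ex by blast
  have np: "\<not> plateau_height (f j) (cost n f s j)" if "j \<in> {1..n}" for j
    using np0 unique_cost[OF assms ns ns0 that] that by simp
  show "super_strong_nash n f mu s" unfolding super_strong_nash_def
  proof (intro conjI ns notI)
    assume "\<exists>s'. profile n mu s' \<and>
           (\<forall>R\<in>coalitions n. \<forall>k. s' R k > s R k \<longrightarrow> cost n f s' k \<le> height n f s R) \<and>
           (\<exists>R\<in>coalitions n. \<exists>k. s' R k > 0 \<and> cost n f s' k < height n f s R)"
    then obtain s' where p': "profile n mu s'"
      and H: "\<forall>R\<in>coalitions n. \<forall>k. s' R k > s R k \<longrightarrow> cost n f s' k \<le> height n f s R"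
      and S: "\<exists>R\<in>coalitions n. \<exists>k. s' R k > 0 \<and> cost n f s' k < height n f s R" by blast
    have hle: "height n f s R \<le> cost n f s k" if R: "R \<in> coalitions n" and pos: "s' R k > 0" for R k
    proof -
      have kR: "k \<in> R" using pos_mem[OF p' pos] by blast
      have "0 < (\<Sum>i\<in>{1..n}. s' R i)"
        using pos pos_mem[OF p' pos] by (intro sum_pos2[of _ k]) (auto intro: prof_nonneg[OF p'])
      then have "0 < (\<Sum>i\<in>{1..n}. s R i)" using prof_sum[OF p' R] prof_sum[OF ps R] by simp
      then obtain k0 where "s R k0 > 0"
        by (metis (no_types, lifting) less_le_not_le not_le sum_nonpos)
      then show "height n f s R \<le> cost n f s k" using height_le[OF ns R _ kR] by blast
    qed
    have dec: "\<forall>R\<in>coalitions n. \<forall>k. s' R k > s R k \<longrightarrow> load n s' k \<le> load n s k"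
    proof (intro ballI allI impI)
      fix R k assume R: "R \<in> coalitions n" and k: "s' R k > s R k"
      have pos: "s' R k > 0" using k prof_nonneg[OF ps, of R k] by simp
      have kn: "k \<in> {1..n}" using pos_mem[OF p' pos] by blast
      have m: "mono_on {0..} (f k)" using assms kn unfolding rs_game_def by blast
      have c1: "cost n f s' k \<le> cost n f s k" using H R k hle[OF R pos] by force
      show "load n s' k \<le> load n s k"
      proof (rule ccontr)
        assume a: "\<not> ?thesis"
        then have "cost n f s k \<le> cost n f s' k" unfolding cost_def
          using mono_onD[OF m] load_nonneg[OF ps] load_nonneg[OF p'] by auto
        then have "f k (load n s' k) = cost n f s k" using c1 unfolding cost_def by simp
        then have "plateau_height (f k) (cost n f s k)" unfolding plateau_height_def
          using a load_nonneg[OF ps, of k] load_nonneg[OF p', of k]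
          by (intro exI[of _ "load n s' k"] exI[of _ "load n s k"]) (auto simp: cost_def)
        then show False using np[OF kn] by simp
      qed
    qed
    obtain R k where R: "R \<in> coalitions n" and pos: "s' R k > 0"
      and lt: "cost n f s' k < height n f s R" using S by blast
    have kn: "k \<in> {1..n}" using pos_mem[OF p' pos] by blast
    have "load n s' k = load n s k" using decrease[OF ps p' dec kn] .
    then show False using lt hle[OF R pos] unfolding cost_def by simp
  qed
qed

end
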